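(* Let $N\ge 2$ and $0<\gamma_1\le\dots\le\gamma_N$. There exists a sum-rate optimal spanning tree $T$ on $\{1,\dots,N\}$ such that for every $0<i<N-1$, the vertex $N-i$ has at most one neighbor $u$ with $\gamma_u<\gamma_{N-i}$ (hence at least $\deg(N-i)-1$ neighbors with SNR at least $\gamma_{N-i}$), and $\deg(N-i)\le i+1$.
   Context: For distinct $i,j$ put $\varphi(i,j)=\log_2\!\big(\gamma_i+\frac{\gamma_i}{\gamma_i+\gamma_j}\big)$. For a spanning tree $T$ on $\{1,\dots,N\}$ with neighbor sets $A_i^T$, define $R_{\mathrm s}(T)=\frac{1}{2(N-1)}\sum_{i=1}^N \min_{j\in A_i^T}\varphi(i,j)$. A spanning tree is called sum-rate optimal if it maximizes $R_{\mathrm s}$ over all spanning trees on $\{1,\dots,N\}$. The value $\gamma_k$ is called the SNR of vertex $k$. *)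

theory Defs
  imports Complex_Main
begin

definition graph_edges :: "nat \<Rightarrow> nat set set \<Rightarrow> bool" where
  "graph_edges N E \<longleftrightarrow> (\<forall>e\<in>E. \<exists>i j. e = {i, j} \<and> i \<noteq> j \<and> i \<in> {1..N} \<and> j \<in> {1..N})"

definition nbrs :: "nat set set \<Rightarrow> nat \<Rightarrow> nat set" where
  "nbrs E i = {j. {i, j} \<in> E}"

definition adj_rel :: "nat set set \<Rightarrow> (nat \<times> nat) set" where
  "adj_rel E = {(i, j). {i, j} \<in> E}"

definition connected_on :: "nat \<Rightarrow> nat set set \<Rightarrow> bool" where
  "connected_on N E \<longleftrightarrow> (\<forall>i\<in>{1..N}. \<forall>j\<in>{1..N}. (i, j) \<in> (adj_rel E)\<^sup>*)"

definition spanning_tree :: "nat \<Rightarrow> nat set set \<Rightarrow> bool" where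
  "spanning_tree N E \<longleftrightarrow> graph_edges N E \<and> connected_on N E \<and> card E = N - 1"

definition phi :: "(nat \<Rightarrow> real) \<Rightarrow> nat \<Rightarrow> nat \<Rightarrow> real" where
  "phi \<gamma> i j = log 2 (\<gamma> i + \<gamma> i / (\<gamma> i + \<gamma> j))"

definition Rs :: "(nat \<Rightarrow> real) \<Rightarrow> nat \<Rightarrow> nat set set \<Rightarrow> real" where
  "Rs \<gamma> N E = (1 / (2 * (real N - 1))) * (\<Sum>i=1..N. Min (phi \<gamma> i ` nbrs E i))"

definition sum_rate_optimal :: "(nat \<Rightarrow> real) \<Rightarrow> nat \<Rightarrow> nat set set \<Rightarrow> bool" where
  "sum_rate_optimal \<gamma> N E \<longleftrightarrow> spanning_tree N E \<and>
     (\<forall>E'. spanning_tree N E' \<longrightarrow> Rs \<gamma> N E' \<le> Rs \<gamma> N E)"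

end

theory Submission
  imports Defs
begin

lemma ge_edge:
  assumes "graph_edges N E" "{i, j} \<in> E"
  shows "i \<in> {1..N} \<and> j \<in> {1..N} \<and> i \<noteq> j"
proof -
  obtain x y where "{i,j} = {x,y}" "x \<noteq> y" "x \<in> {1..N}" "y \<in> {1..N}"
    using assms unfolding graph_edges_def by blast
  then show ?thesis by (auto simp: doubleton_eq_iff)
qed

lemma ge_finite:
  assumes "graph_edges N E" shows "finite E"
proof -
  have "E \<subseteq> Pow {1..N}" using assms unfolding graph_edges_def by auto
  then show ?thesis by (meson finite_Pow_iff finite_atLeastAtMost finite_subset)
qed

lemma nbrs_sub:
  assumes "graph_edges N E" shows "nbrs E i \<subseteq> {1..N}"
  using ge_edge[OF assms] unfolding nbrs_def by blast

lemma conn_card: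
  assumes ge: "graph_edges N E" and cn: "connected_on N E" and N1: "N \<ge> 1"
  shows "N - 1 \<le> card E"
proof -
  define R where "R = adj_rel E"
  define d where "d v = (LEAST n. (1::nat, v) \<in> R ^^ n)" for v
  have dI: "(1, v) \<in> R ^^ d v" if "(1, v) \<in> R ^^ n" for v n
    unfolding d_def using that by (rule LeastI)
  have dle: "d v \<le> n" if "(1, v) \<in> R ^^ n" for v n
    unfolding d_def using that by (rule Least_le)
  have key: "\<exists>u. (u, v) \<in> R \<and> Suc (d u) = d v" if v: "v \<in> {2..N}" for v
  proof -
    have "(1, v) \<in> R\<^sup>*" using cn v N1 unfolding connected_on_def R_def by auto
    then obtain n where "(1, v) \<in> R ^^ n" using rtrancl_power by blast
    then have dv: "(1, v) \<in> R ^^ d v" by (rule dI)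
    have "d v \<noteq> 0" proof
      assume "d v = 0" then show False using dv v by simp
    qed
    then obtain m where m: "d v = Suc m" by (cases "d v") auto
    with dv have "(1, v) \<in> R ^^ m O R" by simp
    then obtain u where u1: "(1, u) \<in> R ^^ m" and uv: "(u, v) \<in> R" by blast
    have "d u \<le> m" using dle[OF u1] .
    moreover have "(1, u) \<in> R ^^ d u" using dI[OF u1] .
    then have "(1, v) \<in> R ^^ Suc (d u)" using uv by auto
    then have "d v \<le> Suc (d u)" by (rule dle)
    ultimately have "Suc (d u) = d v" using m by simp
    then show ?thesis using uv by blast
  qed
  then have "\<forall>v\<in>{2..N}. \<exists>u. (u, v) \<in> R \<and> Suc (d u) = d v" by blast
  then obtain p where p: "\<forall>v\<in>{2..N}. (p v, v) \<in> R \<and> Suc (d (p v)) = d v"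
    by metis
  define f where "f v = {p v, v}" for v
  have "f ` {2..N} \<subseteq> E" using p unfolding f_def R_def adj_rel_def by auto
  moreover have "inj_on f {2..N}"
  proof (rule inj_onI)
    fix v w assume v: "v \<in> {2..N}" and w: "w \<in> {2..N}" and fe: "f v = f w"
    then have "(p v = p w \<and> v = w) \<or> (p v = w \<and> v = p w)"
      unfolding f_def by (auto simp: doubleton_eq_iff)
    moreover have "Suc (d (p v)) = d v" "Suc (d (p w)) = d w" using p v w by auto
    ultimately show "v = w" by auto
  qed
  ultimately have "card {2..N} \<le> card E"
    using card_inj_on_le ge_finite[OF ge] by blast
  then show ?thesis by simp
qed

lemma nbrs_ne:
  assumes st: "spanning_tree N E" and N2: "N \<ge> 2" and i: "i \<in> {1..N}"
  shows "nbrs E i \<noteq> {}"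
proof -
  define j where "j = (if i = 1 then 2 else (1::nat))"
  have j: "j \<in> {1..N}" "j \<noteq> i" using i N2 unfolding j_def by auto
  have "(i, j) \<in> (adj_rel E)\<^sup>*" using st i j unfolding spanning_tree_def connected_on_def by auto
  then obtain y where "(i, y) \<in> adj_rel E"
    using j(2) by (cases rule: converse_rtranclE) auto
  then show ?thesis unfolding nbrs_def adj_rel_def by auto
qed

lemma phi_mono:
  assumes "\<gamma> i > 0" "\<gamma> j > 0" "\<gamma> j' > 0" "\<gamma> j' \<le> \<gamma> j"
  shows "phi \<gamma> i j \<le> phi \<gamma> i j'"
proof -
  have "\<gamma> i / (\<gamma> i + \<gamma> j) \<le> \<gamma> i / (\<gamma> i + \<gamma> j')"
    using assms by (intro divide_left_mono) auto
  moreover have "0 < \<gamma> i + \<gamma> i / (\<gamma> i + \<gamma> j)" using assms by (simp add: add_pos_nonneg)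
  moreover have "0 < \<gamma> i + \<gamma> i / (\<gamma> i + \<gamma> j')" using assms by (simp add: add_pos_nonneg)
  ultimately show ?thesis unfolding phi_def by simp
qed

lemma Rs_mono:
  assumes N2: "N \<ge> 2" and pos: "\<forall>j\<in>{1..N}. \<gamma> j > 0"
    and st: "spanning_tree N E" and st': "spanning_tree N E'"
    and dom: "\<forall>i\<in>{1..N}. \<forall>j'\<in>nbrs E' i. \<exists>j\<in>nbrs E i. \<gamma> j' \<le> \<gamma> j"
  shows "Rs \<gamma> N E \<le> Rs \<gamma> N E'"
proof -
  have ge: "graph_edges N E" "graph_edges N E'" using st st' unfolding spanning_tree_def by auto
  have "Min (phi \<gamma> i ` nbrs E i) \<le> Min (phi \<gamma> i ` nbrs E' i)" if i: "i \<in> {1..N}" for i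
  proof (rule Min.boundedI)
    have "finite (nbrs E' i)" using nbrs_sub[OF ge(2)] finite_subset by blast
    then show "finite (phi \<gamma> i ` nbrs E' i)" by simp
    show "phi \<gamma> i ` nbrs E' i \<noteq> {}" using nbrs_ne[OF st' N2 i] by simp
    show "Min (phi \<gamma> i ` nbrs E i) \<le> a" if aa: "a \<in> phi \<gamma> i ` nbrs E' i" for a
    proof -
      obtain j' where j': "j' \<in> nbrs E' i" "a = phi \<gamma> i j'" using aa by auto
      then obtain j where j: "j \<in> nbrs E i" "\<gamma> j' \<le> \<gamma> j" using dom i by blast
      have fin: "finite (nbrs E i)" using nbrs_sub[OF ge(1)] finite_subset by blast
      have "Min (phi \<gamma> i ` nbrs E i) \<le> phi \<gamma> i j" using j fin by simp
      also have "\<dots> \<le> phi \<gamma> i j'"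
        using phi_mono pos i j j' nbrs_sub[OF ge(1)] nbrs_sub[OF ge(2)] by blast
      finally show "Min (phi \<gamma> i ` nbrs E i) \<le> a" using j' by simp
    qed
  qed
  then have "(\<Sum>i=1..N. Min (phi \<gamma> i ` nbrs E i)) \<le> (\<Sum>i=1..N. Min (phi \<gamma> i ` nbrs E' i))"
    by (intro sum_mono) auto
  moreover have "0 \<le> 1 / (2 * (real N - 1))" using N2 by simp
  ultimately show ?thesis unfolding Rs_def by (rule mult_left_mono)
qed

lemma conn_exch:
  assumes "connected_on N E" "{k,a} \<in> F" "{a,b} \<in> F" "E - {{k,b}} \<subseteq> F"
  shows "connected_on N F"
proof -
  have "adj_rel E \<subseteq> (adj_rel F)\<^sup>*"
  proof (rule subrelI)
    fix x y assume "(x, y) \<in> adj_rel E"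
    then have xy: "{x,y} \<in> E" unfolding adj_rel_def by auto
    show "(x, y) \<in> (adj_rel F)\<^sup>*"
    proof (cases "{x,y} = {k,b}")
      case True
      have ka: "(k,a) \<in> adj_rel F" "(a,k) \<in> adj_rel F" "(a,b) \<in> adj_rel F" "(b,a) \<in> adj_rel F"
        using assms unfolding adj_rel_def by (auto simp: insert_commute)
      from True have "(x = k \<and> y = b) \<or> (x = b \<and> y = k)" by (auto simp: doubleton_eq_iff)
      then show ?thesis using ka
        by (meson converse_rtrancl_into_rtrancl r_into_rtrancl)
    next
      case False
      then show ?thesis using xy assms(4) unfolding adj_rel_def by auto
    qed
  qed
  then have "(adj_rel E)\<^sup>* \<subseteq> (adj_rel F)\<^sup>*" by (rule rtrancl_subset_rtrancl)
  then show ?thesis using assms(1) unfolding connected_on_def by auto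
qed

theorem lemma3:
  fixes N :: nat and \<gamma> :: "nat \<Rightarrow> real"
  assumes "N \<ge> 2"
    and "\<gamma> 1 > 0"
    and "\<And>i j. 1 \<le> i \<Longrightarrow> i \<le> j \<Longrightarrow> j \<le> N \<Longrightarrow> \<gamma> i \<le> \<gamma> j"
  shows "\<exists>E. sum_rate_optimal \<gamma> N E \<and>
           (\<forall>i. 0 < i \<and> i < N - 1 \<longrightarrow>
              card {u \<in> nbrs E (N - i). \<gamma> u < \<gamma> (N - i)} \<le> 1 \<and>
              card (nbrs E (N - i)) \<le> i + 1)"
proof -
  note N2 = assms(1) and mono = assms(3)
  have pos: "\<forall>j\<in>{1..N}. \<gamma> j > 0"
    using assms(2) mono by (meson atLeastAtMost_iff less_le_trans order_refl)
  define E0 where "E0 = (\<lambda>j. {1,j}) ` {2..N}"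
  have st0: "spanning_tree N E0"
  proof -
    have "graph_edges N E0" unfolding graph_edges_def E0_def using N2 by force
    moreover have "inj_on (\<lambda>j. {1::nat,j}) {2..N}"
      by (rule inj_onI) (auto simp: doubleton_eq_iff)
    then have "card E0 = N - 1" unfolding E0_def by (simp add: card_image)
    moreover have "connected_on N E0" unfolding connected_on_def
    proof (intro ballI)
      fix i j assume i: "i \<in> {1..N}" and j: "j \<in> {1..N}"
      have a: "(1, j) \<in> (adj_rel E0)\<^sup>*"
      proof (cases "j = 1")
        case False
        then have "(1, j) \<in> adj_rel E0" using j unfolding adj_rel_def E0_def by auto
        then show ?thesis by blast
      qed simp
      have b: "(i, 1) \<in> (adj_rel E0)\<^sup>*"
      proof (cases "i = 1")
        case False
        then have "{i, 1} \<in> E0" using i unfolding E0_def by (auto simp: insert_commute)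
        then have "(i, 1) \<in> adj_rel E0" unfolding adj_rel_def by auto
        then show ?thesis by blast
      qed simp
      from b a show "(i, j) \<in> (adj_rel E0)\<^sup>*" by (rule rtrancl_trans)
    qed
    ultimately show ?thesis unfolding spanning_tree_def by simp
  qed
  define T where "T = {E. spanning_tree N E}"
  have finT: "finite T"
  proof -
    have "T \<subseteq> Pow (Pow {1..N})" unfolding T_def spanning_tree_def graph_edges_def by auto
    then show ?thesis by (meson finite_Pow_iff finite_atLeastAtMost finite_subset)
  qed
  have "T \<noteq> {}" using st0 unfolding T_def by auto
  then have "Max (Rs \<gamma> N ` T) \<in> Rs \<gamma> N ` T" using finT by (intro Max_in) auto
  then obtain Eo where Eo: "Eo \<in> T" "Rs \<gamma> N Eo = Max (Rs \<gamma> N ` T)" by auto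
  have "sum_rate_optimal \<gamma> N Eo"
    unfolding sum_rate_optimal_def using Eo finT unfolding T_def by auto
  then obtain E where opt: "sum_rate_optimal \<gamma> N E"
    and minP: "\<forall>E'. sum_rate_optimal \<gamma> N E' \<longrightarrow> (\<Sum>e\<in>E. Max e) \<le> (\<Sum>e\<in>E'. Max e)"
    using ex_has_least_nat[where m = "\<lambda>E. \<Sum>e\<in>E. Max e"] by blast
  have st: "spanning_tree N E" using opt unfolding sum_rate_optimal_def by auto
  have ge: "graph_edges N E" and cn: "connected_on N E" and cE: "card E = N - 1"
    using st unfolding spanning_tree_def by auto
  have finE: "finite E" using ge_finite[OF ge] .
  have one: "a = b" if a: "a \<in> nbrs E k" and b: "b \<in> nbrs E k" and ak: "a < k" and bk: "b < k" for k a b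
  proof (rule ccontr)
    assume ab: "a \<noteq> b"
    have ka: "{k,a} \<in> E" and kb: "{k,b} \<in> E" using a b unfolding nbrs_def by auto
    have rng: "k \<in> {1..N}" "a \<in> {1..N}" "b \<in> {1..N}" using ge_edge[OF ge ka] ge_edge[OF ge kb] by auto
    define F where "F = E - {{k,b}}"
    have kaF: "{k,a} \<in> F" using ka ab unfolding F_def by (auto simp: doubleton_eq_iff)
    have cF: "card F = N - 2" using cE kb finE unfolding F_def by simp
    have abE: "{a,b} \<notin> E"
    proof
      assume abE: "{a,b} \<in> E"
      have "{a,b} \<in> F" using abE ak unfolding F_def by (auto simp: doubleton_eq_iff)
      then have "connected_on N F" using conn_exch[OF cn kaF] unfolding F_def by auto
      moreover have "graph_edges N F" using ge unfolding F_def graph_edges_def by auto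
      ultimately have "N - 1 \<le> card F" using conn_card N2 by simp
      then show False using cF N2 by simp
    qed
    define E' where "E' = insert {a,b} F"
    have abF: "{a,b} \<notin> F" using abE unfolding F_def by auto
    have finF: "finite F" using finE unfolding F_def by simp
    have st': "spanning_tree N E'"
    proof -
      have "graph_edges N E'" using ge rng ab unfolding E'_def F_def graph_edges_def by blast
      moreover have "connected_on N E'"
        using conn_exch[OF cn, where a=a and F=E' and b=b and k=k] kaF unfolding E'_def F_def by auto
      moreover have "card E' = N - 1" unfolding E'_def using abF finF cF N2 by simp
      ultimately show ?thesis unfolding spanning_tree_def by simp
    qed
    have dom: "\<forall>i\<in>{1..N}. \<forall>j'\<in>nbrs E' i. \<exists>j\<in>nbrs E i. \<gamma> j' \<le> \<gamma> j"
    proof (intro ballI)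
      fix i j' assume i: "i \<in> {1..N}" and j': "j' \<in> nbrs E' i"
      then have "{i,j'} = {a,b} \<or> {i,j'} \<in> E" unfolding nbrs_def E'_def F_def by auto
      then show "\<exists>j\<in>nbrs E i. \<gamma> j' \<le> \<gamma> j"
      proof
        assume "{i,j'} = {a,b}"
        then have "(i = a \<and> j' = b) \<or> (i = b \<and> j' = a)" by (auto simp: doubleton_eq_iff)
        moreover have "k \<in> nbrs E a" "k \<in> nbrs E b" using ka kb unfolding nbrs_def
          by (auto simp: insert_commute)
        moreover have "\<gamma> a \<le> \<gamma> k" "\<gamma> b \<le> \<gamma> k" using mono rng ak bk by auto
        ultimately show ?thesis by auto
      next
        assume "{i,j'} \<in> E" then have "j' \<in> nbrs E i" unfolding nbrs_def by auto
        then show ?thesis by auto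
      qed
    qed
    have "Rs \<gamma> N E \<le> Rs \<gamma> N E'" using Rs_mono[OF N2 pos st st' dom] .
    then have "sum_rate_optimal \<gamma> N E'"
      using opt st' unfolding sum_rate_optimal_def by force
    then have le: "(\<Sum>e\<in>E. Max e) \<le> (\<Sum>e\<in>E'. Max e)" using minP by blast
    have s1: "(\<Sum>e\<in>E'. Max e) = Max {a,b} + (\<Sum>e\<in>F. Max e)"
      unfolding E'_def using finF abF by simp
    have s2: "(\<Sum>e\<in>E. Max e) = Max {k,b} + (\<Sum>e\<in>F. Max e)"
      unfolding F_def using finE kb by (simp add: sum.remove)
    have "Max {a,b} < k" using ak bk by (simp add: max_def)
    moreover have "Max {k,b} = k" using bk by (simp add: max_def)
    ultimately show False using le s1 s2 by linarith
  qed
  have "\<forall>i. 0 < i \<and> i < N - 1 \<longrightarrow>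
              card {u \<in> nbrs E (N - i). \<gamma> u < \<gamma> (N - i)} \<le> 1 \<and>
              card (nbrs E (N - i)) \<le> i + 1"
  proof (intro allI impI)
    fix i assume i: "0 < i \<and> i < N - 1"
    define k where "k = N - i"
    have k: "1 \<le> k" "k \<le> N" using i unfolding k_def by auto
    have sub: "nbrs E k \<subseteq> {1..N}" using nbrs_sub[OF ge] .
    define B where "B = {u \<in> nbrs E k. u < k}"
    have finN: "finite (nbrs E k)" using sub finite_subset by blast
    have finB: "finite B" unfolding B_def using finN by simp
    have cB: "card B \<le> 1"
      using card_le_Suc0_iff_eq[OF finB] one unfolding B_def by auto
    have "{u \<in> nbrs E k. \<gamma> u < \<gamma> k} \<subseteq> B"
    proof
      fix u assume u: "u \<in> {u \<in> nbrs E k. \<gamma> u < \<gamma> k}"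
      have "u < k"
      proof (rule ccontr)
        assume "\<not> u < k"
        moreover have "u \<le> N" using sub u by auto
        ultimately have "\<gamma> k \<le> \<gamma> u" using mono k by simp
        then show False using u by auto
      qed
      then show "u \<in> B" using u unfolding B_def by auto
    qed
    then have c1: "card {u \<in> nbrs E k. \<gamma> u < \<gamma> k} \<le> 1"
      using card_mono[OF finB] cB by (meson le_trans)
    have "k \<notin> nbrs E k" using ge_edge[OF ge, of k k] unfolding nbrs_def by auto
    then have "nbrs E k \<subseteq> B \<union> {k+1..N}" using sub unfolding B_def
      by (auto simp: subset_iff) (metis Suc_leI linorder_neqE_nat)
    then have "card (nbrs E k) \<le> card (B \<union> {k+1..N})" by (intro card_mono) (use finB in auto)
    also have "\<dots> \<le> card B + card {k+1..N}" by (rule card_Un_le)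
    also have "\<dots> \<le> i + 1" using cB i unfolding k_def by simp
    finally show "card {u \<in> nbrs E (N - i). \<gamma> u < \<gamma> (N - i)} \<le> 1 \<and>
              card (nbrs E (N - i)) \<le> i + 1" using c1 unfolding k_def by simp
  qed
  then show ?thesis using opt by blast
qed

end
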